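(* Let $\varphi$ be an INF sentence over $\Sigma$. Then the symbolic INF propagator $S_\varphi$ describes the INF propagator $O_\varphi$: for every four-valued symbolic $\Sigma$-structure $\tilde\Phi$ over $\Sigma_s$ and every two-valued $\Sigma_s$-structure $E$, $S_\varphi(\tilde\Phi)(E)=O_\varphi(\tilde\Phi(E))$.
   Context: Vocabularies are finite sets of predicate symbols. Four-valued structures: truth values $\mathbf{t},\mathbf{f},\mathbf{u},\mathbf{i}$; inverse swaps $\mathbf{t},\mathbf{f}$ and fixes $\mathbf{u},\mathbf{i}$; truth order $\mathbf{f}\le_t\mathbf{u}\le_t\mathbf{t}$, $\mathbf{f}\le_t\mathbf{i}\le_t\mathbf{t}$; precision order $\mathbf{u}\le_p\mathbf{t}\le_p\mathbf{i}$, $\mathbf{u}\le_p\mathbf{f}\le_p\mathbf{i}$. A four-valued $\Sigma$-structure $\tilde I$ has domain $D$ and gives each $P/n\in\Sigma$ a map $D^n\to\{\mathbf{t},\mathbf{f},\mathbf{u},\mathbf{i}\}$. Formula values: atoms via the structure, $\neg$ by inverse, $\wedge,\forall$ by $\le_t$-glb, $\vee,\exists$ by $\le_t$-lub. Encoding: $\mathrm{tf}(\Sigma)=\{P^{ct}/n,P^{cf}/n\mid P/n\in\Sigma\}$; $\mathrm{tf}(\tilde I)$ is the two-valued $\mathrm{tf}(\Sigma)$-structure with $(P^{ct})^{\mathrm{tf}(\tilde I)}=\{\overline{d}\mid P^{\tilde I}(\overline{d})\ge_p\mathbf{t}\}$ and $(P^{cf})^{\mathrm{tf}(\tilde I)}=\{\overline{d}\mid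 P^{\tilde I}(\overline{d})\ge_p\mathbf{f}\}$; $\tilde I\mapsto\mathrm{tf}(\tilde I)$ is a bijection onto two-valued $\mathrm{tf}(\Sigma)$-structures with domain $D$. Formulas $\varphi^{ct},\varphi^{cf}$ over $\mathrm{tf}(\Sigma)$: $(P(\overline{x}))^{ct}=P^{ct}(\overline{x})$, $(P(\overline{x}))^{cf}=P^{cf}(\overline{x})$; $(\neg\varphi)^{ct}=\varphi^{cf}$, $(\neg\varphi)^{cf}=\varphi^{ct}$; $(\varphi\wedge\psi)^{ct}=\varphi^{ct}\wedge\psi^{ct}$, $(\varphi\wedge\psi)^{cf}=\varphi^{cf}\vee\psi^{cf}$; $(\varphi\vee\psi)^{ct}=\varphi^{ct}\vee\psi^{ct}$, $(\varphi\vee\psi)^{cf}=\varphi^{cf}\wedge\psi^{cf}$; $(\forall x\varphi)^{ct}=\forall x\varphi^{ct}$, $(\forall x\varphi)^{cf}=\exists x\varphi^{cf}$; $(\exists x\varphi)^{ct}=\exists x\varphi^{ct}$, $(\exists x\varphi)^{cf}=\forall x\varphi^{cf}$. Symbolic structures: a symbolic two-valued $\Sigma'$-structure $\Phi$ over $\Sigma_s$ assigns each $P/n\in\Sigma'$ a query $\{(x_1,\dots,x_n)\mid\chi\}$ with $\chi$ a formula over $\Sigma_s$; for a $\Sigma_s$-structure $E$, $\Phi(E)$ is the $\Sigma'$-structure with the same domain and $P^{\Phi(E)}=\{\overline{d}\mid E[\overline{x}/\overline{d}]\models\chi\}$; for a formula $\varphi$ over $\Sigma'$, $\Phi(\varphi)$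 replaces each atom $P(\overline{y})$ by $\chi[\overline{x}/\overline{y}]$. A four-valued symbolic $\Sigma$-structure over $\Sigma_s$ is a symbolic two-valued $\mathrm{tf}(\Sigma)$-structure $\tilde\Phi$ over $\Sigma_s$; $\tilde\Phi(E)$ is identified with the four-valued $\Sigma$-structure $\tilde I$ with $\mathrm{tf}(\tilde I)=\tilde\Phi(E)$. The union of queries of equal arity is $\{\overline{x}\mid\psi\}\cup\{\overline{y}\mid\chi\}=\{\overline{z}\mid\psi[\overline{x}/\overline{z}]\vee\chi[\overline{y}/\overline{z}]\}$ with $\overline{z}$ fresh. INF sentences: $\forall\overline{x}(\psi\supset L[\overline{x}])$ with $\psi$ having free variables among $\overline{x}$, $L$ one of $P(\overline{x}),\neg P(\overline{x})$. INF propagator $O_\varphi$: $O_\varphi(\tilde I)$ agrees with $\tilde I$ except $P^{O_\varphi(\tilde I)}(\overline{d})=\mathrm{lub}_{\le_p}\{\mathbf{t},P^{\tilde I}(\overline{d})\}$ (resp. with $\mathbf{f}$ for negative $L$) whenever $\tilde I[\overline{x}/\overline{d}](\psi)\ge_p\mathbf{t}$. Symbolic INF propagator: for $\varphi=\forall\overline{x}(\psi\supset P(\overline{x}))$, $S_\varphi(\tilde\Phi)$ assigns $(P^{ct})^{\tilde\Phi}\cup\{\overline{x}\mid\tilde\Phi(\psi^{ct})\}$ to $P^{ct}$ and the same queries as $\tilde\Phi$ to all other symbols; for $\varphi=\forall\overline{x}(\psi\supset\neg P(\overline{x}))$, it assigns $(P^{cf})^{\tilde\Phi}\cup\{\overline{x}\mid\tilde\Phi(\psi^{ct})\}$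 to $P^{cf}$ and copies the rest. *)

theory Defs
  imports Main
begin

datatype 'p fm =
    Atom 'p "nat list"
  | Neg "'p fm"
  | Conj "'p fm" "'p fm"
  | Disj "'p fm" "'p fm"
  | Forall nat "'p fm"
  | Exists nat "'p fm"

primrec fv :: "'p fm \<Rightarrow> nat set" where
  "fv (Atom P xs) = set xs"
| "fv (Neg \<phi>) = fv \<phi>"
| "fv (Conj \<phi> \<psi>) = fv \<phi> \<union> fv \<psi>"
| "fv (Disj \<phi> \<psi>) = fv \<phi> \<union> fv \<psi>"
| "fv (Forall x \<phi>) = fv \<phi> - {x}"
| "fv (Exists x \<phi>) = fv \<phi> - {x}"

primrec vars :: "'p fm \<Rightarrow> nat set" where
  "vars (Atom P xs) = set xs"
| "vars (Neg \<phi>) = vars \<phi>"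
| "vars (Conj \<phi> \<psi>) = vars \<phi> \<union> vars \<psi>"
| "vars (Disj \<phi> \<psi>) = vars \<phi> \<union> vars \<psi>"
| "vars (Forall x \<phi>) = insert x (vars \<phi>)"
| "vars (Exists x \<phi>) = insert x (vars \<phi>)"

primrec atoms :: "'p fm \<Rightarrow> ('p \<times> nat) set" where
  "atoms (Atom P xs) = {(P, length xs)}"
| "atoms (Neg \<phi>) = atoms \<phi>"
| "atoms (Conj \<phi> \<psi>) = atoms \<phi> \<union> atoms \<psi>"
| "atoms (Disj \<phi> \<psi>) = atoms \<phi> \<union> atoms \<psi>"
| "atoms (Forall x \<phi>) = atoms \<phi>"
| "atoms (Exists x \<phi>) = atoms \<phi>"

definition vocab :: "('p \<times> nat) set \<Rightarrow> bool" where
  "vocab \<Sigma> \<longleftrightarrow> finite \<Sigma> \<and> (\<forall>P n m. (P, n) \<in> \<Sigma> \<longrightarrow> (P, m) \<in> \<Sigma> \<longrightarrow> n = m)"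

definition fm_over :: "('p \<times> nat) set \<Rightarrow> 'p fm \<Rightarrow> bool" where
  "fm_over \<Sigma> \<phi> \<longleftrightarrow> atoms \<phi> \<subseteq> \<Sigma>"

definition fresh :: "nat set \<Rightarrow> nat" where
  "fresh S = (if S = {} then 0 else Suc (Max S))"

primrec subst :: "(nat \<Rightarrow> nat) \<Rightarrow> 'p fm \<Rightarrow> 'p fm" where
  "subst \<sigma> (Atom P xs) = Atom P (map \<sigma> xs)"
| "subst \<sigma> (Neg \<phi>) = Neg (subst \<sigma> \<phi>)"
| "subst \<sigma> (Conj \<phi> \<psi>) = Conj (subst \<sigma> \<phi>) (subst \<sigma> \<psi>)"
| "subst \<sigma> (Disj \<phi> \<psi>) = Disj (subst \<sigma> \<phi>) (subst \<sigma> \<psi>)"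
| "subst \<sigma> (Forall x \<phi>) =
     (let y = fresh (\<sigma> ` (fv \<phi> - {x})) in Forall y (subst (\<sigma>(x := y)) \<phi>))"
| "subst \<sigma> (Exists x \<phi>) =
     (let y = fresh (\<sigma> ` (fv \<phi> - {x})) in Exists y (subst (\<sigma>(x := y)) \<phi>))"

definition ren :: "nat list \<Rightarrow> nat list \<Rightarrow> nat \<Rightarrow> nat" where
  "ren xs ys v = (case map_of (zip xs ys) v of Some y \<Rightarrow> y | None \<Rightarrow> v)"

definition assign :: "nat list \<Rightarrow> 'd list \<Rightarrow> nat \<Rightarrow> 'd" where
  "assign xs ds v = (case map_of (zip xs ds) v of Some d \<Rightarrow> d | None \<Rightarrow> undefined)"

type_synonym ('p, 'd) struct2 = "'p \<Rightarrow> 'd list \<Rightarrow> bool"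

primrec eval :: "('p, 'd) struct2 \<Rightarrow> (nat \<Rightarrow> 'd) \<Rightarrow> 'p fm \<Rightarrow> bool" where
  "eval E a (Atom P xs) = E P (map a xs)"
| "eval E a (Neg \<phi>) = (\<not> eval E a \<phi>)"
| "eval E a (Conj \<phi> \<psi>) = (eval E a \<phi> \<and> eval E a \<psi>)"
| "eval E a (Disj \<phi> \<psi>) = (eval E a \<phi> \<or> eval E a \<psi>)"
| "eval E a (Forall x \<phi>) = (\<forall>d. eval E (a(x := d)) \<phi>)"
| "eval E a (Exists x \<phi>) = (\<exists>d. eval E (a(x := d)) \<phi>)"

datatype tv = T | F | U | I

fun inv :: "tv \<Rightarrow> tv" where
  "inv T = F" | "inv F = T" | "inv U = U" | "inv I = I"

definition leq_t :: "tv \<Rightarrow> tv \<Rightarrow> bool" where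
  "leq_t a b \<longleftrightarrow> a = b \<or> a = F \<or> b = T"

definition leq_p :: "tv \<Rightarrow> tv \<Rightarrow> bool" where
  "leq_p a b \<longleftrightarrow> a = b \<or> a = U \<or> b = I"

definition glb_t :: "tv set \<Rightarrow> tv" where
  "glb_t S = (THE g. (\<forall>x\<in>S. leq_t g x) \<and> (\<forall>h. (\<forall>x\<in>S. leq_t h x) \<longrightarrow> leq_t h g))"

definition lub_t :: "tv set \<Rightarrow> tv" where
  "lub_t S = (THE g. (\<forall>x\<in>S. leq_t x g) \<and> (\<forall>h. (\<forall>x\<in>S. leq_t x h) \<longrightarrow> leq_t g h))"

definition lub_p :: "tv set \<Rightarrow> tv" where
  "lub_p S = (THE g. (\<forall>x\<in>S. leq_p x g) \<and> (\<forall>h. (\<forall>x\<in>S. leq_p x h) \<longrightarrow> leq_p g h))"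

type_synonym ('p, 'd) struct4 = "'p \<Rightarrow> 'd list \<Rightarrow> tv"

primrec val4 :: "('p, 'd) struct4 \<Rightarrow> (nat \<Rightarrow> 'd) \<Rightarrow> 'p fm \<Rightarrow> tv" where
  "val4 J a (Atom P xs) = J P (map a xs)"
| "val4 J a (Neg \<phi>) = inv (val4 J a \<phi>)"
| "val4 J a (Conj \<phi> \<psi>) = glb_t {val4 J a \<phi>, val4 J a \<psi>}"
| "val4 J a (Disj \<phi> \<psi>) = lub_t {val4 J a \<phi>, val4 J a \<psi>}"
| "val4 J a (Forall x \<phi>) = glb_t {val4 J (a(x := d)) \<phi> | d. True}"
| "val4 J a (Exists x \<phi>) = lub_t {val4 J (a(x := d)) \<phi> | d. True}"

section \<open>The tf encoding. Symbol (P, True) is P^ct, (P, False) is P^cf.\<close>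

definition tf_voc :: "('p \<times> nat) set \<Rightarrow> (('p \<times> bool) \<times> nat) set" where
  "tf_voc \<Sigma> = {((P, b), n) | P b n. (P, n) \<in> \<Sigma>}"

definition tf :: "('p, 'd) struct4 \<Rightarrow> ('p \<times> bool, 'd) struct2" where
  "tf J = (\<lambda>(P, b) ds. if b then leq_p T (J P ds) else leq_p F (J P ds))"

fun ct :: "'p fm \<Rightarrow> ('p \<times> bool) fm" and cf :: "'p fm \<Rightarrow> ('p \<times> bool) fm" where
  "ct (Atom P xs) = Atom (P, True) xs"
| "cf (Atom P xs) = Atom (P, False) xs"
| "ct (Neg \<phi>) = cf \<phi>"
| "cf (Neg \<phi>) = ct \<phi>"
| "ct (Conj \<phi> \<psi>) = Conj (ct \<phi>) (ct \<psi>)"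
| "cf (Conj \<phi> \<psi>) = Disj (cf \<phi>) (cf \<psi>)"
| "ct (Disj \<phi> \<psi>) = Disj (ct \<phi>) (ct \<psi>)"
| "cf (Disj \<phi> \<psi>) = Conj (cf \<phi>) (cf \<psi>)"
| "ct (Forall x \<phi>) = Forall x (ct \<phi>)"
| "cf (Forall x \<phi>) = Exists x (cf \<phi>)"
| "ct (Exists x \<phi>) = Exists x (ct \<phi>)"
| "cf (Exists x \<phi>) = Forall x (cf \<phi>)"

text \<open>A query {(x_1,...,x_n) | chi} is the pair (xs, chi).\<close>
type_synonym 's query = "nat list \<times> 's fm"

type_synonym ('q, 's) symstruct = "'q \<Rightarrow> 's query"

definition is_symstruct :: "('q \<times> nat) set \<Rightarrow> ('s \<times> nat) set \<Rightarrow> ('q, 's) symstruct \<Rightarrow> bool" where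
  "is_symstruct \<Sigma>' \<Sigma>s \<Phi> \<longleftrightarrow>
     (\<forall>Q n. (Q, n) \<in> \<Sigma>' \<longrightarrow>
        length (fst (\<Phi> Q)) = n \<and> distinct (fst (\<Phi> Q)) \<and>
        fv (snd (\<Phi> Q)) \<subseteq> set (fst (\<Phi> Q)) \<and> fm_over \<Sigma>s (snd (\<Phi> Q)))"

definition sym_apply :: "('q, 's) symstruct \<Rightarrow> ('s, 'd) struct2 \<Rightarrow> ('q, 'd) struct2" where
  "sym_apply \<Phi> E = (\<lambda>Q ds. length ds = length (fst (\<Phi> Q)) \<and>
                          eval E (assign (fst (\<Phi> Q)) ds) (snd (\<Phi> Q)))"

primrec sym_fm :: "('q, 's) symstruct \<Rightarrow> 'q fm \<Rightarrow> 's fm" where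
  "sym_fm \<Phi> (Atom Q ys) = subst (ren (fst (\<Phi> Q)) ys) (snd (\<Phi> Q))"
| "sym_fm \<Phi> (Neg \<phi>) = Neg (sym_fm \<Phi> \<phi>)"
| "sym_fm \<Phi> (Conj \<phi> \<psi>) = Conj (sym_fm \<Phi> \<phi>) (sym_fm \<Phi> \<psi>)"
| "sym_fm \<Phi> (Disj \<phi> \<psi>) = Disj (sym_fm \<Phi> \<phi>) (sym_fm \<Phi> \<psi>)"
| "sym_fm \<Phi> (Forall x \<phi>) = Forall x (sym_fm \<Phi> \<phi>)"
| "sym_fm \<Phi> (Exists x \<phi>) = Exists x (sym_fm \<Phi> \<phi>)"

definition sym4_apply :: "('p \<times> bool, 's) symstruct \<Rightarrow> ('s, 'd) struct2 \<Rightarrow> ('p, 'd) struct4" where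
  "sym4_apply \<Phi> E = (THE J. tf J = sym_apply \<Phi> E)"

definition query_union :: "'s query \<Rightarrow> 's query \<Rightarrow> 's query" where
  "query_union q1 q2 =
     (let (xs, \<psi>) = q1; (ys, \<chi>) = q2;
          m = fresh (set xs \<union> set ys \<union> vars \<psi> \<union> vars \<chi>);
          zs = [m ..< m + length xs]
      in (zs, Disj (subst (ren xs zs) \<psi>) (subst (ren ys zs) \<chi>)))"

text \<open>InfS xs psi P pos stands for  \<forall>xs (psi \<supset> P(xs))  (pos) or  \<forall>xs (psi \<supset> \<not>P(xs))  (not pos).\<close>
datatype 'p inf = InfS "nat list" "'p fm" 'p bool

definition inf_over :: "('p \<times> nat) set \<Rightarrow> 'p inf \<Rightarrow> bool" where
  "inf_over \<Sigma> \<phi> = (case \<phi> of InfS xs \<psi> P pos \<Rightarrow>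
      distinct xs \<and> fv \<psi> \<subseteq> set xs \<and> fm_over \<Sigma> \<psi> \<and> (P, length xs) \<in> \<Sigma>)"

definition O_inf :: "'p inf \<Rightarrow> ('p, 'd) struct4 \<Rightarrow> ('p, 'd) struct4" where
  "O_inf \<phi> J = (case \<phi> of InfS xs \<psi> P pos \<Rightarrow>
      J(P := (\<lambda>ds. if length ds = length xs \<and> leq_p T (val4 J (assign xs ds) \<psi>)
                   then lub_p {if pos then T else F, J P ds} else J P ds)))"

definition S_inf :: "'p inf \<Rightarrow> ('p \<times> bool, 's) symstruct \<Rightarrow> ('p \<times> bool, 's) symstruct" where
  "S_inf \<phi> \<Phi> = (case \<phi> of InfS xs \<psi> P pos \<Rightarrow>
      \<Phi>((P, pos) := query_union (\<Phi> (P, pos)) (xs, sym_fm \<Phi> (ct \<psi>))))"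

end

theory Submission
  imports Defs
begin

definition mk :: "bool \<Rightarrow> bool \<Rightarrow> tv" where
  "mk p q = (if p then (if q then I else T) else (if q then F else U))"

lemma mk_bits[simp]: "leq_p T (mk p q) = p" "leq_p F (mk p q) = q"
  by (auto simp: mk_def leq_p_def)

lemma tv_eq: "x = y \<longleftrightarrow> (leq_p T x = leq_p T y \<and> leq_p F x = leq_p F y)"
  by (cases x; cases y; simp add: leq_p_def)

lemma eq_mk: "x = mk p q \<longleftrightarrow> (leq_p T x = p \<and> leq_p F x = q)"
  by (subst tv_eq) simp

lemma leq_t_bits: "leq_t a b \<longleftrightarrow> ((leq_p T a \<longrightarrow> leq_p T b) \<and> (leq_p F b \<longrightarrow> leq_p F a))"
  by (cases a; cases b; simp add: leq_t_def leq_p_def)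

lemma glb_t_mk: "glb_t S = mk (\<forall>x\<in>S. leq_p T x) (\<exists>x\<in>S. leq_p F x)"
  unfolding glb_t_def
proof (rule the_equality)
  let ?m = "mk (\<forall>x\<in>S. leq_p T x) (\<exists>x\<in>S. leq_p F x)"
  have 1: "\<forall>x\<in>S. leq_t ?m x" unfolding leq_t_bits by (simp, (blast)?)
  have 2: "\<forall>h. (\<forall>x\<in>S. leq_t h x) \<longrightarrow> leq_t h ?m" unfolding leq_t_bits by (simp, (blast)?)
  show "(\<forall>x\<in>S. leq_t ?m x) \<and> (\<forall>h. (\<forall>x\<in>S. leq_t h x) \<longrightarrow> leq_t h ?m)" using 1 2 by blast
next
  let ?m = "mk (\<forall>x\<in>S. leq_p T x) (\<exists>x\<in>S. leq_p F x)"
  fix g assume g: "(\<forall>x\<in>S. leq_t g x) \<and> (\<forall>h. (\<forall>x\<in>S. leq_t h x) \<longrightarrow> leq_t h g)"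
  have a: "\<forall>x\<in>S. leq_t ?m x" unfolding leq_t_bits by (simp, (blast)?)
  have b: "leq_t ?m g" using g a by blast
  have c: "\<forall>x\<in>S. leq_t g x" using g by blast
  show "g = ?m" unfolding eq_mk using b c unfolding leq_t_bits by (simp, (blast)?)
qed

lemma lub_t_mk: "lub_t S = mk (\<exists>x\<in>S. leq_p T x) (\<forall>x\<in>S. leq_p F x)"
  unfolding lub_t_def
proof (rule the_equality)
  let ?m = "mk (\<exists>x\<in>S. leq_p T x) (\<forall>x\<in>S. leq_p F x)"
  have 1: "\<forall>x\<in>S. leq_t x ?m" unfolding leq_t_bits by (simp, (blast)?)
  have 2: "\<forall>h. (\<forall>x\<in>S. leq_t x h) \<longrightarrow> leq_t ?m h" unfolding leq_t_bits by (simp, (blast)?)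
  show "(\<forall>x\<in>S. leq_t x ?m) \<and> (\<forall>h. (\<forall>x\<in>S. leq_t x h) \<longrightarrow> leq_t ?m h)" using 1 2 by blast
next
  let ?m = "mk (\<exists>x\<in>S. leq_p T x) (\<forall>x\<in>S. leq_p F x)"
  fix g assume g: "(\<forall>x\<in>S. leq_t x g) \<and> (\<forall>h. (\<forall>x\<in>S. leq_t x h) \<longrightarrow> leq_t g h)"
  have a: "\<forall>x\<in>S. leq_t x ?m" unfolding leq_t_bits by (simp, (blast)?)
  have b: "leq_t g ?m" using g a by blast
  have c: "\<forall>x\<in>S. leq_t x g" using g by blast
  show "g = ?m" unfolding eq_mk using b c unfolding leq_t_bits by (simp, (blast)?)
qed

lemma lub_p_T: "lub_p {T, x} = (if x = T \<or> x = U then T else I)"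
  unfolding lub_p_def
  by (cases x; rule the_equality; auto simp: leq_p_def)

lemma lub_p_F: "lub_p {F, x} = (if x = F \<or> x = U then F else I)"
  unfolding lub_p_def
  by (cases x; rule the_equality; auto simp: leq_p_def)

lemma inv_bits[simp]: "leq_p T (inv x) = leq_p F x" "leq_p F (inv x) = leq_p T x"
  by (cases x; simp add: leq_p_def)+

lemma val4_ct_cf:
  "leq_p T (val4 J a \<phi>) = eval (tf J) a (ct \<phi>) \<and> leq_p F (val4 J a \<phi>) = eval (tf J) a (cf \<phi>)"
proof (induction \<phi> arbitrary: a)
  case (Atom P xs) then show ?case by (simp add: tf_def)
qed (auto simp: glb_t_mk lub_t_mk)

lemma tf_inj: "tf J = tf K \<Longrightarrow> J = K"
proof (rule ext, rule ext)
  fix P ds assume "tf J = tf K"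
  then have "tf J (P, True) ds = tf K (P, True) ds" "tf J (P, False) ds = tf K (P, False) ds" by auto
  then show "J P ds = K P ds" by (subst tv_eq) (simp add: tf_def)
qed

lemma tf_surj: "tf (\<lambda>P ds. mk (S (P, True) ds) (S (P, False) ds)) = S"
proof (rule ext, rule ext)
  fix Pb :: "'a \<times> bool" and ds
  obtain P b where "Pb = (P, b)" by fastforce
  then show "tf (\<lambda>P ds. mk (S (P, True) ds) (S (P, False) ds)) Pb ds = S Pb ds"
    by (cases b) (auto simp: tf_def)
qed

lemma tf_sym4: "tf (sym4_apply \<Phi> E) = sym_apply \<Phi> E"
proof -
  let ?J = "\<lambda>P ds. mk (sym_apply \<Phi> E (P, True) ds) (sym_apply \<Phi> E (P, False) ds)"
  have "sym4_apply \<Phi> E = ?J"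
    unfolding sym4_apply_def
    by (rule the_equality) (auto intro: tf_inj simp: tf_surj)
  then show ?thesis by (simp add: tf_surj)
qed

lemma finite_fv: "finite (fv \<phi>)"
  by (induction \<phi>) auto

lemma fresh_notin: "finite S \<Longrightarrow> fresh S \<notin> S"
proof
  assume f: "finite S" and m: "fresh S \<in> S"
  then have ne: "S \<noteq> {}" by auto
  then have "fresh S = Suc (Max S)" by (simp add: fresh_def)
  moreover have "fresh S \<le> Max S" using Max_ge[OF f m] .
  ultimately show False by simp
qed

lemma eval_cong: "(\<forall>v\<in>fv \<phi>. a v = b v) \<Longrightarrow> eval E a \<phi> = eval E b \<phi>"
proof (induction \<phi> arbitrary: a b)
  case (Atom P xs) then show ?case by (simp cong: map_cong)
next
  case (Neg p) then show ?case by simp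
next
  case (Conj p q)
  have "eval E a p = eval E b p" by (rule Conj.IH(1)) (use Conj.prems in auto)
  moreover have "eval E a q = eval E b q" by (rule Conj.IH(2)) (use Conj.prems in auto)
  ultimately show ?case by simp
next
  case (Disj p q)
  have "eval E a p = eval E b p" by (rule Disj.IH(1)) (use Disj.prems in auto)
  moreover have "eval E a q = eval E b q" by (rule Disj.IH(2)) (use Disj.prems in auto)
  ultimately show ?case by simp
next
  case (Forall x \<phi>)
  have "\<And>d. eval E (a(x:=d)) \<phi> = eval E (b(x:=d)) \<phi>"
    by (rule Forall.IH) (use Forall.prems in auto)
  then show ?case by simp
next
  case (Exists x \<phi>)
  have "\<And>d. eval E (a(x:=d)) \<phi> = eval E (b(x:=d)) \<phi>"
    by (rule Exists.IH) (use Exists.prems in auto)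
  then show ?case by simp
qed

lemma eval_subst: "eval E a (subst \<sigma> \<phi>) = eval E (a \<circ> \<sigma>) \<phi>"
proof (induction \<phi> arbitrary: a \<sigma>)
  case (Forall x \<phi>)
  define y where "y = fresh (\<sigma> ` (fv \<phi> - {x}))"
  have y: "y \<notin> \<sigma> ` (fv \<phi> - {x})" unfolding y_def
    by (rule fresh_notin) (simp add: finite_fv)
  have *: "\<And>d. eval E (a(y:=d) \<circ> \<sigma>(x:=y)) \<phi> = eval E ((a \<circ> \<sigma>)(x:=d)) \<phi>"
    by (rule eval_cong) (use y in auto)
  show ?case
    unfolding subst.simps Let_def y_def[symmetric] eval.simps Forall.IH by (simp only: *)
next
  case (Exists x \<phi>)
  define y where "y = fresh (\<sigma> ` (fv \<phi> - {x}))"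
  have y: "y \<notin> \<sigma> ` (fv \<phi> - {x})" unfolding y_def
    by (rule fresh_notin) (simp add: finite_fv)
  have *: "\<And>d. eval E (a(y:=d) \<circ> \<sigma>(x:=y)) \<phi> = eval E ((a \<circ> \<sigma>)(x:=d)) \<phi>"
    by (rule eval_cong) (use y in auto)
  show ?case
    unfolding subst.simps Let_def y_def[symmetric] eval.simps Exists.IH by (simp only: *)
qed auto

lemma ren_assign:
  assumes "distinct xs" "length xs = length ys" "v \<in> set xs"
  shows "a (ren xs ys v) = assign xs (map a ys) v"
proof -
  obtain i where i: "i < length xs" "v = xs ! i" using assms(3) by (auto simp: in_set_conv_nth)
  have "map_of (zip xs ys) v = Some (ys ! i)" using map_of_zip_nth[of xs ys i] assms i by simp
  moreover have "map_of (zip xs (map a ys)) v = Some (map a ys ! i)"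
    using map_of_zip_nth[of xs "map a ys" i] assms i by simp
  ultimately show ?thesis using i assms by (simp add: ren_def assign_def)
qed

lemma assign_ren:
  assumes "distinct xs" "distinct zs" "length xs = length zs" "length ds = length zs" "v \<in> set xs"
  shows "assign zs ds (ren xs zs v) = assign xs ds v"
proof -
  obtain i where i: "i < length xs" "v = xs ! i" using assms(5) by (auto simp: in_set_conv_nth)
  have "map_of (zip xs zs) v = Some (zs ! i)" using map_of_zip_nth[of xs zs i] assms i by simp
  moreover have "map_of (zip xs ds) v = Some (ds ! i)"
    using map_of_zip_nth[of xs ds i] assms i by simp
  moreover have "map_of (zip zs ds) (zs ! i) = Some (ds ! i)"
    using map_of_zip_nth[of zs ds i] assms i by simp
  ultimately show ?thesis by (simp add: ren_def assign_def)
qed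

lemma sym_fm_eval:
  assumes "is_symstruct \<Sigma>' \<Sigma>s \<Phi>" "atoms \<phi> \<subseteq> \<Sigma>'"
  shows "eval E a (sym_fm \<Phi> \<phi>) = eval (sym_apply \<Phi> E) a \<phi>"
  using assms(2)
proof (induction \<phi> arbitrary: a)
  case (Atom Q ys)
  obtain xs0 \<chi> where q: "\<Phi> Q = (xs0, \<chi>)" by fastforce
  have "length (fst (\<Phi> Q)) = length ys \<and> distinct (fst (\<Phi> Q)) \<and> fv (snd (\<Phi> Q)) \<subseteq> set (fst (\<Phi> Q))"
    using Atom assms(1) unfolding is_symstruct_def by auto
  then have w: "length xs0 = length ys" "distinct xs0" "fv \<chi> \<subseteq> set xs0" by (auto simp: q)
  have "eval E (a \<circ> ren xs0 ys) \<chi> = eval E (assign xs0 (map a ys)) \<chi>"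
    by (rule eval_cong) (use w ren_assign[of xs0 ys _ a] in auto)
  then show ?case by (simp add: q eval_subst sym_apply_def w)
qed auto

lemma ct_cf_props:
  "fv (ct \<phi>) = fv \<phi> \<and> fv (cf \<phi>) = fv \<phi> \<and>
   atoms (ct \<phi>) \<subseteq> {((P, b), n) | P b n. (P, n) \<in> atoms \<phi>} \<and>
   atoms (cf \<phi>) \<subseteq> {((P, b), n) | P b n. (P, n) \<in> atoms \<phi>}"
  by (induction \<phi>) auto

lemma tf_apply: "tf J (P, b) ds = leq_p (if b then T else F) (J P ds)"
  by (simp add: tf_def)

lemma lub_p_single: "lub_p {x} = x"
  unfolding lub_p_def by (rule the_equality) (auto simp: leq_p_def)

lemma lub_bits1: "leq_p (if pos then T else F) (lub_p {if pos then T else F, x}) = True"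
  by (cases pos) (simp_all add: lub_p_T lub_p_F lub_p_single leq_p_def)

lemma lub_bits2: "leq_p (if \<not> pos then T else F) (lub_p {if pos then T else F, x}) = leq_p (if \<not> pos then T else F) x"
  by (cases pos; cases x) (simp_all add: lub_p_T lub_p_F lub_p_single leq_p_def)

lemmas lub_bits = lub_bits1 lub_bits2

theorem proposition5p7:
  fixes \<Sigma> :: "('p \<times> nat) set" and \<Sigma>s :: "('s \<times> nat) set"
    and \<phi> :: "'p inf" and \<Phi> :: "('p \<times> bool, 's) symstruct"
    and E :: "('s, 'd) struct2"
  assumes "vocab \<Sigma>" and "vocab \<Sigma>s"
    and "inf_over \<Sigma> \<phi>"
    and "is_symstruct (tf_voc \<Sigma>) \<Sigma>s \<Phi>"
  shows "sym4_apply (S_inf \<phi> \<Phi>) E = O_inf \<phi> (sym4_apply \<Phi> E)"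
proof -
  obtain xs \<psi> P pos where phi: "\<phi> = InfS xs \<psi> P pos" by (cases \<phi>)
  from assms(3) have wf: "distinct xs" "fv \<psi> \<subseteq> set xs" "atoms \<psi> \<subseteq> \<Sigma>" "(P, length xs) \<in> \<Sigma>"
    by (auto simp: inf_over_def phi fm_over_def)
  define J where "J = sym4_apply \<Phi> E"
  have tfJ: "tf J = sym_apply \<Phi> E" by (simp add: J_def tf_sym4)
  obtain xs0 \<chi>0 where q0: "\<Phi> (P, pos) = (xs0, \<chi>0)" by fastforce
  have "((P, pos), length xs) \<in> tf_voc \<Sigma>" using wf by (auto simp: tf_voc_def)
  then have "length (fst (\<Phi> (P, pos))) = length xs \<and> distinct (fst (\<Phi> (P, pos))) \<and> fv (snd (\<Phi> (P, pos))) \<subseteq> set (fst (\<Phi> (P, pos)))"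
    using assms(4) unfolding is_symstruct_def by blast
  then have w0: "length xs0 = length xs" "distinct xs0" "fv \<chi>0 \<subseteq> set xs0" by (auto simp: q0)
  have atct: "atoms (ct \<psi>) \<subseteq> tf_voc \<Sigma>"
    using ct_cf_props[of \<psi>] wf(3) by (auto simp: tf_voc_def)
  define m where "m = fresh (set xs0 \<union> set xs \<union> vars \<chi>0 \<union> vars (sym_fm \<Phi> (ct \<psi>)))"
  define zs where "zs = [m ..< m + length xs0]"
  have qu: "S_inf \<phi> \<Phi> (P, pos) = (zs, Disj (subst (ren xs0 zs) \<chi>0) (subst (ren xs zs) (sym_fm \<Phi> (ct \<psi>))))"
    by (simp add: S_inf_def phi query_union_def q0 Let_def m_def zs_def)
  have zs: "distinct zs" "length zs = length xs" using w0 by (auto simp: zs_def)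
  have key: "sym_apply (S_inf \<phi> \<Phi>) E = tf (O_inf \<phi> J)"
  proof (rule ext, rule ext)
    fix Qb :: "'p \<times> bool" and ds :: "'d list"
    obtain Q b where Qb: "Qb = (Q, b)" by fastforce
    show "sym_apply (S_inf \<phi> \<Phi>) E Qb ds = tf (O_inf \<phi> J) Qb ds"
    proof (cases "Q = P \<and> b = pos")
      case True
      show ?thesis
      proof (cases "length ds = length xs")
        case False
        have "tf J (P, pos) ds = False" using False w0 by (simp add: tfJ sym_apply_def q0)
        have L: "sym_apply (S_inf \<phi> \<Phi>) E (P, pos) ds = False"
          using False zs by (simp add: qu sym_apply_def)
        have R: "tf (O_inf \<phi> J) (P, pos) ds = tf J (P, pos) ds"
          using False by (simp add: O_inf_def phi tf_apply)
        show ?thesis using True L R \<open>tf J (P, pos) ds = False\<close> by (simp add: Qb)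
      next
        case len: True
        have e1: "eval E (assign zs ds) (subst (ren xs0 zs) \<chi>0) = tf J (P, pos) ds"
          unfolding eval_subst tfJ sym_apply_def q0 using len w0 zs
          by (simp, intro eval_cong) (use w0 assign_ren[of xs0 zs ds] in auto)
        have "eval E (assign zs ds) (subst (ren xs zs) (sym_fm \<Phi> (ct \<psi>)))
            = eval (sym_apply \<Phi> E) (assign zs ds \<circ> ren xs zs) (ct \<psi>)"
          unfolding eval_subst by (rule sym_fm_eval[OF assms(4) atct])
        also have "\<dots> = eval (sym_apply \<Phi> E) (assign xs ds) (ct \<psi>)"
          by (rule eval_cong) (use ct_cf_props[of \<psi>] wf zs len assign_ren[of xs zs ds] in auto)
        also have "\<dots> = leq_p T (val4 J (assign xs ds) \<psi>)"
          using val4_ct_cf[of J "assign xs ds" \<psi>] tfJ by simp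
        finally have e2: "eval E (assign zs ds) (subst (ren xs zs) (sym_fm \<Phi> (ct \<psi>)))
            = leq_p T (val4 J (assign xs ds) \<psi>)" .
        have L: "sym_apply (S_inf \<phi> \<Phi>) E (P, pos) ds = (tf J (P, pos) ds \<or> leq_p T (val4 J (assign xs ds) \<psi>))"
          using len zs e1 e2 by (simp add: qu sym_apply_def)
        have R: "tf (O_inf \<phi> J) (P, pos) ds = (tf J (P, pos) ds \<or> leq_p T (val4 J (assign xs ds) \<psi>))"
          using len by (simp add: O_inf_def phi tf_apply lub_bits)
        show ?thesis using True L R by (simp add: Qb)
      qed
    next
      case False
      have "S_inf \<phi> \<Phi> (Q, b) = \<Phi> (Q, b)" using False by (auto simp: S_inf_def phi)
      then have l: "sym_apply (S_inf \<phi> \<Phi>) E (Q, b) ds = tf J (Q, b) ds"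
        by (simp add: tfJ sym_apply_def)
      show ?thesis
      proof (cases "Q = P")
        case False then show ?thesis using l by (simp add: Qb O_inf_def phi tf_def)
      next
        case True
        with \<open>\<not> (Q = P \<and> b = pos)\<close> have "b = (\<not> pos)" by auto
        then show ?thesis using l True
          by (simp add: Qb O_inf_def phi tf_apply lub_bits)
      qed
    qed
  qed
  show ?thesis unfolding J_def[symmetric]
    by (rule tf_inj) (simp add: tf_sym4 key)
qed

end
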